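(* Fix integers $1\le N_c\le N_f$, Zipf exponent $\delta>0$ with $p_f=f^{-\delta}/\sum_{n=1}^{N_f}n^{-\delta}$, and parameters $\alpha>2$, integer $M_1\ge1$, $B_{12}>0$, $W>0$, $R_0\ge0$; put $\gamma_0=2^{R_0/W}-1$. For $\lambda_{12}>0$, $P_{12}>0$ let $\mathsf C_1=\mathsf C_1(\lambda_{12},P_{12})=\lambda_{12}(P_{12}B_{12})^{2/\alpha}\,{}_2F_1[-\tfrac2\alpha,M_1;1-\tfrac2\alpha;-\tfrac{\gamma_0}{M_1B_{12}}]$ and let $\mathbf q^*=(q^*_f)_f$ be the maximizer of $\sum_{f=1}^{N_f}\frac{p_fq_f}{\mathsf C_1+q_f}$ over $\{\mathbf q\in[0,1]^{N_f}:\sum_fq_f\le N_c\}$, i.e. $q^*_f=\big[\frac{\sqrt{\mathsf C_1}}{\sqrt\nu}\sqrt{p_f}-\mathsf C_1\big]_0^1$ with $\nu>0$ such that $\sum_fq^*_f=N_c$. Then $q^*_f-q^*_{f+1}$ increases with $\lambda_{12}$ and with $P_{12}$: if $(\lambda_{12},P_{12})$ and $(\lambda'_{12},P'_{12})$ satisfy $\lambda_{12}\le\lambda'_{12}$, $P_{12}\le P'_{12}$ with at least one inequality strict, and $f\in\{1,\dots,N_f-1\}$ is such that $q^*_f,q^*_{f+1}\in(0,1)$ under both parameter choices, then $q^*_f-q^*_{f+1}$ is strictly larger under $(\lambda'_{12},P'_{12})$ than under $(\lambda_{12},P_{12})$.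
   Context: $[x]_0^1=\max\{\min\{x,1\},0\}$; ${}_2F_1$ is the Gauss hypergeometric function. $\lambda_{12}=\lambda_1/\lambda_2$ and $P_{12}=P_1/P_2$ are the macro-to-helper density and transmit power ratios, $B_{12}$ the bias ratio, $M_1$ the number of macro BS antennas. The objective is the helper-tier success probability in the low-user-density regime (each helper serves at most one user and helper activity probability tends to 0), and $\mathbf q^*$ is the optimal helper caching probability vector. *)

theory Defs
  imports "HOL-Analysis.Analysis"
begin

definition hyp2F1_series :: "real \<Rightarrow> real \<Rightarrow> real \<Rightarrow> real \<Rightarrow> real" where
  "hyp2F1_series a b c z =
     (\<Sum>n. pochhammer a n * pochhammer b n / pochhammer c n * z ^ n / fact n)"

text \<open>Gauss hypergeometric function on real arguments z < 1: the power series for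
  abs z < 1, and for z \<le> -1 its analytic continuation given by the Pfaff transformation
  2F1(a,b;c;z) = (1-z) powr (-a) * 2F1(a,c-b;c;z/(z-1)).  (Values for z \<ge> 1 are
  irrelevant here and set to 0.)\<close>
definition hyp2F1 :: "real \<Rightarrow> real \<Rightarrow> real \<Rightarrow> real \<Rightarrow> real" where
  "hyp2F1 a b c z =
     (if \<bar>z\<bar> < 1 then hyp2F1_series a b c z
      else if z \<le> -1 then (1 - z) powr (-a) * hyp2F1_series a (c - b) c (z / (z - 1))
      else 0)"

definition zipf :: "real \<Rightarrow> nat \<Rightarrow> nat \<Rightarrow> real" where
  "zipf \<delta> Nf f = (real f) powr (-\<delta>) / (\<Sum>n=1..Nf. (real n) powr (-\<delta>))"

definition gamma0 :: "real \<Rightarrow> real \<Rightarrow> real" where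
  "gamma0 R0 W = 2 powr (R0 / W) - 1"

definition C1 :: "real \<Rightarrow> nat \<Rightarrow> real \<Rightarrow> real \<Rightarrow> real \<Rightarrow> real \<Rightarrow> real \<Rightarrow> real" where
  "C1 \<alpha> M1 B12 W R0 lam12 P12 =
     lam12 * (P12 * B12) powr (2 / \<alpha>) *
     hyp2F1 (-2 / \<alpha>) (real M1) (1 - 2 / \<alpha>) (- gamma0 R0 W / (real M1 * B12))"

definition objective :: "real \<Rightarrow> nat \<Rightarrow> real \<Rightarrow> (nat \<Rightarrow> real) \<Rightarrow> real" where
  "objective \<delta> Nf C q = (\<Sum>f=1..Nf. zipf \<delta> Nf f * q f / (C + q f))"

definition feasible :: "nat \<Rightarrow> nat \<Rightarrow> (nat \<Rightarrow> real) \<Rightarrow> bool" where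
  "feasible Nf Nc q \<longleftrightarrow> (\<forall>f\<in>{1..Nf}. 0 \<le> q f \<and> q f \<le> 1) \<and> (\<Sum>f=1..Nf. q f) \<le> real Nc"

definition is_optimal :: "real \<Rightarrow> nat \<Rightarrow> nat \<Rightarrow> real \<Rightarrow> (nat \<Rightarrow> real) \<Rightarrow> bool" where
  "is_optimal \<delta> Nf Nc C q \<longleftrightarrow> feasible Nf Nc q \<and>
     (\<forall>q'. feasible Nf Nc q' \<longrightarrow> objective \<delta> Nf C q' \<le> objective \<delta> Nf C q)"

end

theory Submission
  imports Defs
begin


lemma poch_ratio:
  fixes a :: real assumes "-1 < a" "a < 0"
  shows "pochhammer a n / pochhammer (1 + a) n = a / (a + real n)"
proof -
  have p: "pochhammer (a + 1) n > 0" by (rule pochhammer_pos) (use assms in auto)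
  have "pochhammer a n * (a + real n) = a * pochhammer (a + 1) n"
    using pochhammer_Suc[of a n] pochhammer_rec[of a n] by simp
  moreover have "a + real n \<noteq> 0" using assms by (cases n) auto
  ultimately show ?thesis using p by (simp add: field_simps add.commute)
qed

lemma binom_sums:
  fixes e w :: real assumes "\<bar>w\<bar> < 1"
  shows "(\<lambda>n. pochhammer e n / fact n * w^n) sums (1 - w) powr (-e)"
proof -
  have "(\<lambda>n. ((-e) gchoose n) * (-w)^n) sums (1 + -w) powr (-e)"
    by (rule gen_binomial_real) (use assms in auto)
  moreover have "((-e) gchoose n) * (-w)^n = pochhammer e n / fact n * w^n" for n
  proof -
    have "((-e) gchoose n) * (-w)^n = ((-1)^n * (-1)^n) * (pochhammer e n / fact n * w^n)"
      by (simp add: gbinomial_pochhammer power_minus[of w])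
    also have "(-1::real)^n * (-1)^n = 1" by (simp add: power_mult_distrib[symmetric])
    finally show ?thesis by simp
  qed
  ultimately show ?thesis by simp
qed

lemma hseries_ge1:
  fixes a e w :: real
  assumes a1: "-1 < a" and a0: "a < 0" and w1: "\<bar>w\<bar> < 1"
    and E: "\<And>s. 0 \<le> s \<Longrightarrow> s \<le> 1 \<Longrightarrow> (1 - s*w) powr (-e) \<le> 1"
  shows "1 \<le> (\<Sum>n. a / (a + real n) * (pochhammer e n / fact n) * w^n)"
proof -
  define d where "d n = pochhammer e n / fact n" for n
  define c where "c n = a / (a + real n) * d n * w^n" for n
  define K :: real where "K = 2 / (1 + \<bar>w\<bar>)"
  have K1: "1 < K" using w1 by (simp add: K_def field_simps)
  have Kw: "K * \<bar>w\<bar> < 1" using w1 by (simp add: K_def field_simps)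
  have Kw0: "0 \<le> K * \<bar>w\<bar>" using K1 by simp
  define r where "r = (1 + K * \<bar>w\<bar>) / 2"
  have r: "K * \<bar>w\<bar> < r" "r < 1" "0 < r" using Kw Kw0 by (auto simp: r_def)
  have "summable (\<lambda>n. d n * r^n)"
    using binom_sums[of r e] r unfolding d_def by (auto simp: sums_iff)
  then have absd: "summable (\<lambda>n. norm (d n * (K*\<bar>w\<bar>)^n))"
    by (rule powser_insidea) (use r Kw0 in auto)
  have bnd: "\<bar>a / (a + real n)\<bar> \<le> 1 / (1 + a)" for n
  proof (cases n)
    case 0 then show ?thesis using a1 a0 by (simp add: field_simps)
  next
    case (Suc m)
    then have pos: "a + real n \<ge> 1 + a" by simp
    have "\<bar>a / (a + real n)\<bar> = - a / (a + real n)" using a0 a1 pos by (simp add: abs_div_pos)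
    also have "\<dots> \<le> 1 / (a + real n)" using a1 a1 pos by (intro divide_right_mono) auto
    also have "\<dots> \<le> 1 / (1 + a)" using a1 pos by (intro divide_left_mono) auto
    finally show ?thesis .
  qed
  have sumK: "summable (\<lambda>n. norm (c n * K^n))"
  proof (rule summable_comparison_test[OF _ summable_mult[OF absd, of "1/(1+a)"]])
    show "\<exists>N. \<forall>n\<ge>N. norm (norm (c n * K ^ n)) \<le> 1 / (1 + a) * norm (d n * (K * \<bar>w\<bar>) ^ n)"
    proof (intro exI allI impI)
      fix n :: nat
      have "norm (norm (c n * K ^ n)) = \<bar>a / (a + real n)\<bar> * norm (d n * (K * \<bar>w\<bar>) ^ n)"
        using K1 by (simp add: c_def abs_mult power_mult_distrib power_abs)
      also have "\<dots> \<le> 1 / (1 + a) * norm (d n * (K * \<bar>w\<bar>) ^ n)"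
        by (rule mult_right_mono[OF bnd]) simp
      finally show "norm (norm (c n * K ^ n)) \<le> 1 / (1 + a) * norm (d n * (K * \<bar>w\<bar>) ^ n)" .
    qed
  qed
  have smK: "summable (\<lambda>n. c n * K^n)" by (rule summable_norm_cancel[OF sumK])
  have sm: "summable (\<lambda>n. c n * s^n)" if "\<bar>s\<bar> < K" for s
    using that K1 by (intro summable_norm_cancel[OF powser_insidea[OF smK]]) auto
  define H where "H s = (\<Sum>n. c n * s^n)" for s
  define D where "D s = (\<Sum>n. diffs c n * s^n)" for s
  have DH: "DERIV H s :> D s" if "\<bar>s\<bar> < K" for s
    unfolding H_def D_def by (rule termdiffs_strong[OF smK]) (use that K1 in auto)
  have apos: "a + real n \<noteq> 0" for n using a1 a0 by (cases n) auto
  have key: "s * D s + a * H s = a * (1 - s*w) powr (-e)" if "0 \<le> s" "s \<le> 1" for s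
  proof -
    have sK: "\<bar>s\<bar> < K" using that K1 by auto
    have smD: "summable (\<lambda>n. diffs c n * s^n)"
      by (rule termdiff_converges[of s K]) (use sK sm in auto)
    define g where "g n = real n * c n * s^n" for n
    have "(\<lambda>n. diffs c n * s^n * s) sums (D s * s)"
      unfolding D_def by (rule sums_mult2) (use smD in \<open>simp add: summable_sums\<close>)
    moreover have "diffs c n * s^n * s = g (Suc n)" for n
      by (simp add: diffs_def g_def)
    ultimately have "(\<lambda>n. g (Suc n)) sums (D s * s)" by simp
    moreover have "g 0 = 0" by (simp add: g_def)
    ultimately have gs: "g sums (D s * s)" using sums_Suc_iff[of g "D s * s"] by simp
    have Hs: "(\<lambda>n. a * (c n * s^n)) sums (a * H s)"
      unfolding H_def by (rule sums_mult) (use sm[OF sK] in \<open>simp add: summable_sums\<close>)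
    have "(\<lambda>n. g n + a * (c n * s^n)) sums (D s * s + a * H s)"
      by (rule sums_add[OF gs Hs])
    moreover have "g n + a * (c n * s^n) = a * (d n * (s*w)^n)" for n
    proof -
      have "g n + a * (c n * s^n) = (real n + a) * (a / (a + real n)) * d n * (s*w)^n"
        by (simp add: g_def c_def power_mult_distrib algebra_simps add_divide_distrib)
      also have "(real n + a) * (a / (a + real n)) = a" using apos[of n] by (simp add: add.commute)
      finally show ?thesis by simp
    qed
    ultimately have "(\<lambda>n. a * (d n * (s*w)^n)) sums (D s * s + a * H s)" by simp
    moreover have "(\<lambda>n. a * (d n * (s*w)^n)) sums (a * (1 - s*w) powr (-e))"
    proof (rule sums_mult)
      have "\<bar>s*w\<bar> < 1" using that w1 by (auto simp: abs_mult intro: le_less_trans[OF mult_left_le_one_le])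
      then show "(\<lambda>n. d n * (s*w)^n) sums (1 - s*w) powr (-e)"
        using binom_sums[of "s*w" e] by (simp add: d_def)
    qed
    ultimately show ?thesis by (metis sums_unique2 mult.commute)
  qed
  define u where "u s = s powr a * (H s - 1)" for s
  have mono: "u s \<le> u 1" if "0 < s" "s \<le> 1" for s
  proof (rule DERIV_nonneg_imp_nondecreasing[OF that(2)])
    fix x assume x: "s \<le> x" "x \<le> 1"
    have xK: "\<bar>x\<bar> < K" using x that K1 by auto
    have "DERIV u x :> (a * x powr (a-1) * (H x - 1) + x powr a * D x)"
      unfolding u_def using has_real_derivative_powr[of x a] DH[OF xK] x that
      by (auto intro!: derivative_eq_intros)
    moreover have "a * x powr (a-1) * (H x - 1) + x powr a * D x
        = x powr (a - 1) * (a * ((1 - x*w) powr (-e) - 1))"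
    proof -
      have "x powr a = x powr (a - 1) * x" using x that by (simp add: powr_diff)
      then have "a * x powr (a-1) * (H x - 1) + x powr a * D x = x powr (a-1) * (x * D x + a * H x - a)"
        by (simp add: algebra_simps)
      also have "\<dots> = x powr (a - 1) * (a * ((1 - x*w) powr (-e) - 1))"
        using key[of x] x that by (simp add: algebra_simps)
      finally show ?thesis .
    qed
    moreover have "0 \<le> x powr (a - 1) * (a * ((1 - x*w) powr (-e) - 1))"
      using E[of x] x that a0 by (intro mult_nonneg_nonneg mult_nonpos_nonpos) auto
    ultimately show "\<exists>y. DERIV u x :> y \<and> 0 \<le> y" by auto
  qed
  define Kf where "Kf s = (\<Sum>n. c (Suc n) * s^n)" for s
  have smS: "summable (\<lambda>n. c (Suc n) * s^n)" if "\<bar>s\<bar> < K" for s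
  proof (cases "s = 0")
    case True then show ?thesis by simp
  next
    case False
    have "summable (\<lambda>n. c (Suc n) * s^(Suc n))"
      using sm[OF that] summable_Suc_iff[of "\<lambda>n. c n * s^n"] by simp
    then have "summable (\<lambda>n. c (Suc n) * s^(Suc n) / s)" by (rule summable_divide)
    then show ?thesis using False by simp
  qed
  have c0: "c 0 = 1" using a0 by (simp add: c_def d_def)
  have HK: "H s - 1 = s * Kf s" if "\<bar>s\<bar> < K" for s
  proof -
    have "(\<lambda>n. c n * s^n) sums H s" unfolding H_def using sm[OF that] by (simp add: summable_sums)
    then have "(\<lambda>n. c (Suc n) * s^(Suc n)) sums (H s - 1)"
      using sums_Suc_iff[of "\<lambda>n. c n * s^n" "H s - 1"] c0 by simp
    moreover have "(\<lambda>n. s * (c (Suc n) * s^n)) sums (s * Kf s)"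
      unfolding Kf_def by (rule sums_mult) (use smS[OF that] in \<open>simp add: summable_sums\<close>)
    moreover have "(\<lambda>n. c (Suc n) * s^(Suc n)) = (\<lambda>n. s * (c (Suc n) * s^n))"
      by (simp add: mult_ac)
    ultimately show ?thesis using sums_unique2 by metis
  qed
  have "isCont Kf 0"
    unfolding Kf_def by (rule isCont_powser[of _ 1]) (use smS[of 1] K1 in auto)
  then have Kt: "(Kf \<longlongrightarrow> Kf 0) (at_right 0)"
    by (simp add: isCont_def filterlim_at_split)
  have Pt: "((\<lambda>s. s powr (1 + a)) \<longlongrightarrow> 0) (at_right 0)"
    by (rule tendsto_zero_powrI) (use a1 in \<open>auto intro!: tendsto_eq_intros eventually_at_rightI[of 0 1]\<close>)
  have "((\<lambda>s. s powr (1 + a) * Kf s) \<longlongrightarrow> 0 * Kf 0) (at_right 0)"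
    by (rule tendsto_mult[OF Pt Kt])
  moreover have "\<forall>\<^sub>F s in at_right 0. s powr (1 + a) * Kf s = u s"
  proof (rule eventually_at_rightI[of 0 1])
    fix s :: real assume s: "s \<in> {0<..<1}"
    then have "u s = s powr a * (s * Kf s)" using HK[of s] K1 by (simp add: u_def)
    also have "\<dots> = s powr (1 + a) * Kf s" using s by (simp add: powr_add)
    finally show "s powr (1 + a) * Kf s = u s" by simp
  qed simp
  ultimately have ut: "(u \<longlongrightarrow> 0) (at_right 0)" by (simp add: tendsto_cong)
  have "0 \<le> u 1"
    by (rule tendsto_le[OF _ tendsto_const ut]) (auto intro!: eventually_at_rightI[of 0 1] mono)
  then have "1 \<le> H 1" by (simp add: u_def)
  then show ?thesis by (simp add: H_def c_def d_def)
qed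

lemma series_rewrite:
  fixes a b z :: real assumes "-1 < a" "a < 0"
  shows "hyp2F1_series a b (1 + a) z = (\<Sum>n. a / (a + real n) * (pochhammer b n / fact n) * z^n)"
proof -
  have "pochhammer a n * pochhammer b n / pochhammer (1 + a) n * z ^ n / fact n
        = (pochhammer a n / pochhammer (1 + a) n) * (pochhammer b n / fact n) * z^n" for n
    by simp
  then show ?thesis unfolding hyp2F1_series_def using poch_ratio[OF assms] by simp
qed

lemma hyp_pos:
  fixes \<alpha> x :: real and M :: nat
  assumes "\<alpha> > 2" "M \<ge> 1" "x \<ge> 0"
  shows "hyp2F1 (-2 / \<alpha>) (real M) (1 - 2 / \<alpha>) (- x) > 0"
proof -
  define a where "a = -2 / \<alpha>"
  have a1: "-1 < a" and a0: "a < 0" using assms by (auto simp: a_def field_simps)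
  have c: "1 - 2 / \<alpha> = 1 + a" by (simp add: a_def)
  have eq: "hyp2F1 (-2 / \<alpha>) (real M) (1 - 2 / \<alpha>) (- x) = hyp2F1 a (real M) (1 + a) (- x)"
    unfolding a_def by simp
  have "0 < hyp2F1 a (real M) (1 + a) (- x)"
  proof (cases "x < 1")
    case True
    have "1 \<le> (\<Sum>n. a / (a + real n) * (pochhammer (real M) n / fact n) * (-x)^n)"
    proof (rule hseries_ge1[OF a1 a0])
      show "\<bar>- x\<bar> < 1" using True assms by simp
      fix s :: real assume s: "0 \<le> s" "s \<le> 1"
      have "1 \<le> (1 - s * - x) powr real M"
        by (rule ge_one_powr_ge_zero) (use s assms in auto)
      then show "(1 - s * - x) powr (- real M) \<le> 1"
        by (simp add: powr_minus inverse_le_1_iff)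
    qed
    then show ?thesis using True assms by (simp add: hyp2F1_def series_rewrite[OF a1 a0])
  next
    case False
    define w where "w = -x / (-x - 1)"
    have w: "0 \<le> w" "w < 1" using False by (auto simp: w_def field_simps)
    have "1 \<le> (\<Sum>n. a / (a + real n) * (pochhammer (1 + a - real M) n / fact n) * w^n)"
    proof (rule hseries_ge1[OF a1 a0])
      show "\<bar>w\<bar> < 1" using w by simp
      fix s :: real assume s: "0 \<le> s" "s \<le> 1"
      have "s * w \<le> 1" using s w by (meson le_less_trans less_imp_le mult_left_le_one_le)
      moreover have "0 \<le> s * w" using s w by simp
      ultimately show "(1 - s * w) powr (- (1 + a - real M)) \<le> 1"
        using a0 assms by (intro powr_le1) auto
    qed
    moreover have "(1 - - x) powr (- a) > 0" using assms by simp
    moreover have "\<not> \<bar>- x\<bar> < 1" "- x \<le> -1" using False by auto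
    ultimately show ?thesis unfolding w_def hyp2F1_def series_rewrite[OF a1 a0] by (simp only: if_False if_True) simp
  qed
  then show ?thesis using eq by simp
qed



lemma zipf_pos:
  assumes "1 \<le> g" "1 \<le> Nf"
  shows "zipf \<delta> Nf g > 0"
proof -
  have "(\<Sum>n=1..Nf. (real n) powr (-\<delta>)) > 0"
    using assms by (intro sum_pos) auto
  then show ?thesis using assms by (simp add: zipf_def)
qed

lemma zipf_strict:
  assumes "1 \<le> g" "1 \<le> Nf" "\<delta> > 0"
  shows "zipf \<delta> Nf (g + 1) < zipf \<delta> Nf g"
proof -
  have D: "(\<Sum>n=1..Nf. (real n) powr (-\<delta>)) > 0"
    using assms by (intro sum_pos) auto
  have "real (g + 1) powr (-\<delta>) < real g powr (-\<delta>)"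
    using assms by (intro powr_less_mono2_neg) auto
  then show ?thesis using D by (simp add: zipf_def divide_strict_right_mono)
qed

lemma sum_two:
  assumes "finite A" "i \<in> A" "j \<in> A" "i \<noteq> j" "\<And>g. g \<in> A \<Longrightarrow> g \<noteq> i \<Longrightarrow> g \<noteq> j \<Longrightarrow> F g = 0"
  shows "sum F A = F i + (F j :: real)"
proof -
  have "sum F A = sum F {i, j}"
    by (rule sum.mono_neutral_right) (use assms in auto)
  then show ?thesis using assms by simp
qed

lemma sum_one:
  assumes "finite A" "i \<in> A" "\<And>g. g \<in> A \<Longrightarrow> g \<noteq> i \<Longrightarrow> F g = 0"
  shows "sum F A = (F i :: real)"
proof -
  have "sum F A = sum F {i}"
    by (rule sum.mono_neutral_right) (use assms in auto)
  then show ?thesis by simp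
qed

lemma phi_diff:
  fixes C x t p :: real
  assumes "C + x > 0" "C + x + t > 0"
  shows "p * (x + t) / (C + x + t) - p * x / (C + x) = t * C * (p / ((C + x) * (C + x + t)))"
  using assms by (simp add: field_simps)

lemma exch:
  fixes C :: real and q :: "nat \<Rightarrow> real"
  assumes C: "C > 0" and opt: "is_optimal \<delta> Nf Nc C q"
    and ij: "i \<in> {1..Nf}" "j \<in> {1..Nf}" "i \<noteq> j" and qi: "q i < 1" and qj: "0 < q j"
  shows "zipf \<delta> Nf i / (C + q i)^2 \<le> zipf \<delta> Nf j / (C + q j)^2"
proof -
  define p where "p = zipf \<delta> Nf"
  have feas: "feasible Nf Nc q" and mx: "\<And>q'. feasible Nf Nc q' \<Longrightarrow> objective \<delta> Nf C q' \<le> objective \<delta> Nf C q"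
    using opt by (auto simp: is_optimal_def)
  have q01: "\<And>g. g \<in> {1..Nf} \<Longrightarrow> 0 \<le> q g \<and> q g \<le> 1" using feas by (auto simp: feasible_def)
  define m where "m = min (1 - q i) (q j)"
  have m: "m > 0" using qi qj by (simp add: m_def)
  define L where "L t = p i / ((C + q i) * (C + q i + t))" for t
  define R where "R t = p j / ((C + q j) * (C + q j - t))" for t
  have LR: "L t \<le> R t" if t: "0 < t" "t < m" for t
  proof -
    define qt where "qt = q(i := q i + t, j := q j - t)"
    have qt_i: "qt i = q i + t" and qt_j: "qt j = q j - t" and qt_o: "\<And>g. g \<noteq> i \<Longrightarrow> g \<noteq> j \<Longrightarrow> qt g = q g"
      using ij by (auto simp: qt_def)
    have "feasible Nf Nc qt"
      unfolding feasible_def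
    proof
      have tm: "t < 1 - q i" "t < q j" using t by (auto simp: m_def)
      show "\<forall>g\<in>{1..Nf}. 0 \<le> qt g \<and> qt g \<le> 1"
      proof
        fix g assume g: "g \<in> {1..Nf}"
        show "0 \<le> qt g \<and> qt g \<le> 1"
        proof (cases "g = i")
          case True then show ?thesis using qt_i q01[OF ij(1)] tm t by simp
        next
          case False
          show ?thesis
          proof (cases "g = j")
            case True then show ?thesis using qt_j q01[OF ij(2)] tm t by simp
          next
            case False2: False
            then show ?thesis using qt_o[OF False False2] q01[OF g] by simp
          qed
        qed
      qed
      have "(\<Sum>g=1..Nf. qt g - q g) = (qt i - q i) + (qt j - q j)"
        by (rule sum_two) (use ij qt_o in auto)
      then have "(\<Sum>g=1..Nf. qt g) - (\<Sum>g=1..Nf. q g) = 0"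
        by (simp add: sum_subtractf qt_i qt_j)
      then show "(\<Sum>g=1..Nf. qt g) \<le> real Nc" using feas by (simp add: feasible_def)
    qed
    then have le: "objective \<delta> Nf C qt - objective \<delta> Nf C q \<le> 0" using mx by simp
    have "objective \<delta> Nf C qt - objective \<delta> Nf C q
        = (\<Sum>g=1..Nf. p g * qt g / (C + qt g) - p g * q g / (C + q g))"
      by (simp add: objective_def sum_subtractf p_def)
    also have "\<dots> = (p i * qt i / (C + qt i) - p i * q i / (C + q i)) + (p j * qt j / (C + qt j) - p j * q j / (C + q j))"
      by (rule sum_two) (use ij qt_o in auto)
    also have "\<dots> = t * C * L t - t * C * R t"
    proof -
      have nn: "0 \<le> q i" "0 \<le> q j" using q01 ij by auto
      have a: "C + q i > 0" "C + q i + t > 0" "C + q j > 0" "C + q j + - t > 0"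
        using C nn t qj by (auto simp: m_def)
      show ?thesis
        using phi_diff[OF a(1,2), of "p i"] phi_diff[OF a(3,4), of "p j"]
        by (simp add: qt_i qt_j L_def R_def add.assoc[symmetric] add_diff_eq)
    qed
    finally have "t * C * (L t - R t) \<le> 0" using le by (simp add: algebra_simps)
    then have "L t - R t \<le> 0" using t m C by (simp add: mult_le_0_iff)
    then show ?thesis by simp
  qed
  have a: "C + q i > 0" "C + q j > 0" using C q01[OF ij(1)] q01[OF ij(2)] by auto
  have Lt: "(L \<longlongrightarrow> L 0) (at_right 0)" unfolding L_def using a
    by (auto intro!: tendsto_eq_intros)
  have Rt: "(R \<longlongrightarrow> R 0) (at_right 0)" unfolding R_def using a
    by (auto intro!: tendsto_eq_intros)
  have ev: "\<forall>\<^sub>F t in at_right 0. L t \<le> R t"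
    by (rule eventually_at_rightI[of 0 m]) (use m LR in auto)
  have "L 0 \<le> R 0" by (rule tendsto_le[OF _ Rt Lt ev]) simp
  then show ?thesis by (simp add: L_def R_def p_def power2_eq_square)
qed

lemma tight:
  fixes C :: real and q :: "nat \<Rightarrow> real"
  assumes C: "C > 0" and opt: "is_optimal \<delta> Nf Nc C q"
    and f: "f \<in> {1..Nf}" and qf: "q f < 1" and pf: "zipf \<delta> Nf f > 0"
  shows "(\<Sum>g=1..Nf. q g) = real Nc"
proof (rule ccontr)
  assume ne: "(\<Sum>g=1..Nf. q g) \<noteq> real Nc"
  define p where "p = zipf \<delta> Nf"
  have feas: "feasible Nf Nc q" and mx: "\<And>q'. feasible Nf Nc q' \<Longrightarrow> objective \<delta> Nf C q' \<le> objective \<delta> Nf C q"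
    using opt by (auto simp: is_optimal_def)
  have q01: "\<And>g. g \<in> {1..Nf} \<Longrightarrow> 0 \<le> q g \<and> q g \<le> 1" using feas by (auto simp: feasible_def)
  have lt: "(\<Sum>g=1..Nf. q g) < real Nc" using ne feas by (simp add: feasible_def)
  define t where "t = min (1 - q f) (real Nc - (\<Sum>g=1..Nf. q g))"
  have t: "t > 0" using lt qf by (simp add: t_def)
  define qt where "qt = q(f := q f + t)"
  have qt_f: "qt f = q f + t" and qt_o: "\<And>g. g \<noteq> f \<Longrightarrow> qt g = q g" by (auto simp: qt_def)
  have "feasible Nf Nc qt"
    unfolding feasible_def
  proof
    have tm: "t \<le> 1 - q f" by (simp add: t_def)
    show "\<forall>g\<in>{1..Nf}. 0 \<le> qt g \<and> qt g \<le> 1"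
    proof
      fix g assume g: "g \<in> {1..Nf}"
      show "0 \<le> qt g \<and> qt g \<le> 1"
      proof (cases "g = f")
        case True then show ?thesis using qt_f q01[OF f] tm t by simp
      next
        case False then show ?thesis using qt_o[OF False] q01[OF g] by simp
      qed
    qed
    have "(\<Sum>g=1..Nf. qt g - q g) = qt f - q f"
      by (rule sum_one) (use f qt_o in auto)
    then have "(\<Sum>g=1..Nf. qt g) = (\<Sum>g=1..Nf. q g) + t"
      by (simp add: sum_subtractf qt_f)
    then show "(\<Sum>g=1..Nf. qt g) \<le> real Nc" by (simp add: t_def)
  qed
  then have le: "objective \<delta> Nf C qt - objective \<delta> Nf C q \<le> 0" using mx by simp
  have "objective \<delta> Nf C qt - objective \<delta> Nf C q
        = (\<Sum>g=1..Nf. p g * qt g / (C + qt g) - p g * q g / (C + q g))"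
    by (simp add: objective_def sum_subtractf p_def)
  also have "\<dots> = p f * qt f / (C + qt f) - p f * q f / (C + q f)"
    by (rule sum_one) (use f qt_o in auto)
  also have "\<dots> = t * C * (p f / ((C + q f) * (C + q f + t)))"
    using phi_diff[of C "q f" t "p f"] C q01[OF f] t by (simp add: qt_f add.assoc)
  finally have "t * C * (p f / ((C + q f) * (C + q f + t))) \<le> 0" using le by simp
  moreover have "t * C * (p f / ((C + q f) * (C + q f + t))) > 0"
    using t C pf q01[OF f] by (simp add: p_def)
  ultimately show False by simp
qed

lemma conv:
  fixes P1 P2 X1 X2 :: real
  assumes "0 < P1" "0 < P2" "0 < X1" "0 < X2" "P1 / X1^2 \<le> P2 / X2^2"
  shows "X2 * sqrt P1 \<le> X1 * sqrt P2"
proof -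
  have "P1 * X2^2 \<le> P2 * X1^2" using assms by (simp add: field_simps)
  moreover have "(X2 * sqrt P1)^2 = P1 * X2^2" "(X1 * sqrt P2)^2 = P2 * X1^2"
    using assms by (simp_all add: power_mult_distrib)
  ultimately have "(X2 * sqrt P1)^2 \<le> (X1 * sqrt P2)^2" by simp
  then show ?thesis by (rule power2_le_imp_le) (use assms in simp)
qed

lemma kkt:
  fixes C :: real and q :: "nat \<Rightarrow> real"
  assumes C: "C > 0" and opt: "is_optimal \<delta> Nf Nc C q"
    and f: "f \<in> {1..Nf}" and qf: "0 < q f" "q f < 1"
    and g: "g \<in> {1..Nf}"
  shows "q g < 1 \<Longrightarrow> (C + q f) / sqrt (zipf \<delta> Nf f) * sqrt (zipf \<delta> Nf g) - C \<le> q g"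
    and "0 < q g \<Longrightarrow> q g \<le> (C + q f) / sqrt (zipf \<delta> Nf f) * sqrt (zipf \<delta> Nf g) - C"
proof -
  have feas: "feasible Nf Nc q" using opt by (auto simp: is_optimal_def)
  have q01: "\<And>g. g \<in> {1..Nf} \<Longrightarrow> 0 \<le> q g \<and> q g \<le> 1" using feas by (auto simp: feasible_def)
  have pf: "zipf \<delta> Nf f > 0" and pg: "zipf \<delta> Nf g > 0" using f g by (auto intro!: zipf_pos)
  have sf: "sqrt (zipf \<delta> Nf f) > 0" using pf by simp
  have Xf: "C + q f > 0" and Xg: "C + q g > 0" using C q01[OF f] q01[OF g] by auto
  show "q g < 1 \<Longrightarrow> (C + q f) / sqrt (zipf \<delta> Nf f) * sqrt (zipf \<delta> Nf g) - C \<le> q g"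
  proof (cases "g = f")
    case True then show ?thesis using sf by simp
  next
    case False
    assume "q g < 1"
    from exch[OF C opt g f False this qf(1)]
    have "(C + q f) * sqrt (zipf \<delta> Nf g) \<le> (C + q g) * sqrt (zipf \<delta> Nf f)"
      by (rule conv[OF pg pf Xg Xf])
    then have "(C + q f) * sqrt (zipf \<delta> Nf g) / sqrt (zipf \<delta> Nf f) \<le> C + q g"
      using sf by (simp add: pos_divide_le_eq)
    then show ?thesis by simp
  qed
  show "0 < q g \<Longrightarrow> q g \<le> (C + q f) / sqrt (zipf \<delta> Nf f) * sqrt (zipf \<delta> Nf g) - C"
  proof (cases "g = f")
    case True then show ?thesis using sf by simp
  next
    case False
    assume "0 < q g"
    from exch[OF C opt f g _ qf(2) this] False
    have "zipf \<delta> Nf f / (C + q f)\<^sup>2 \<le> zipf \<delta> Nf g / (C + q g)\<^sup>2" by auto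
    then have "(C + q g) * sqrt (zipf \<delta> Nf f) \<le> (C + q f) * sqrt (zipf \<delta> Nf g)"
      by (rule conv[OF pf pg Xf Xg])
    then have "C + q g \<le> (C + q f) * sqrt (zipf \<delta> Nf g) / sqrt (zipf \<delta> Nf f)"
      using sf by (simp add: pos_le_divide_eq)
    then show ?thesis by simp
  qed
qed



theorem corollary3:
  fixes Nf Nc M1 f :: nat
    and \<delta> \<alpha> B12 W R0 lam12 P12 lam12' P12' :: real
    and q q' :: "nat \<Rightarrow> real"
  assumes "1 \<le> Nc" "Nc \<le> Nf"
    and "\<delta> > 0" "\<alpha> > 2" "M1 \<ge> 1" "B12 > 0" "W > 0" "R0 \<ge> 0"
    and "lam12 > 0" "P12 > 0" "lam12' > 0" "P12' > 0"
    and "lam12 \<le> lam12'" "P12 \<le> P12'" "lam12 < lam12' \<or> P12 < P12'"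
    and "is_optimal \<delta> Nf Nc (C1 \<alpha> M1 B12 W R0 lam12 P12) q"
    and "is_optimal \<delta> Nf Nc (C1 \<alpha> M1 B12 W R0 lam12' P12') q'"
    and "1 \<le> f" "f \<le> Nf - 1"
    and "0 < q f" "q f < 1" "0 < q (f+1)" "q (f+1) < 1"
    and "0 < q' f" "q' f < 1" "0 < q' (f+1)" "q' (f+1) < 1"
  shows "q f - q (f+1) < q' f - q' (f+1)"
proof -
  note A = assms
  define H where "H = hyp2F1 (-2 / \<alpha>) (real M1) (1 - 2 / \<alpha>) (- gamma0 R0 W / (real M1 * B12))"
  have g0: "gamma0 R0 W \<ge> 0"
  proof -
    have "1 \<le> (2::real) powr (R0 / W)" by (rule ge_one_powr_ge_zero) (use A in auto)
    then show ?thesis by (simp add: gamma0_def)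
  qed
  have x0: "gamma0 R0 W / (real M1 * B12) \<ge> 0" using g0 A by simp
  have "H = hyp2F1 (-2 / \<alpha>) (real M1) (1 - 2 / \<alpha>) (- (gamma0 R0 W / (real M1 * B12)))"
    by (simp add: H_def)
  then have Hpos: "H > 0" using hyp_pos[OF A(4) A(5) x0] by simp
  define C where "C = C1 \<alpha> M1 B12 W R0 lam12 P12"
  define C' where "C' = C1 \<alpha> M1 B12 W R0 lam12' P12'"
  have Cd: "C = lam12 * (P12 * B12) powr (2 / \<alpha>) * H" by (simp add: C_def C1_def H_def)
  have C'd: "C' = lam12' * (P12' * B12) powr (2 / \<alpha>) * H" by (simp add: C'_def C1_def H_def)
  have X: "0 < (P12 * B12) powr (2 / \<alpha>)" using A by simp
  have XX: "(P12 * B12) powr (2 / \<alpha>) \<le> (P12' * B12) powr (2 / \<alpha>)"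
    using A by (intro powr_mono2) auto
  have Cpos: "C > 0" using Cd X Hpos A by simp
  have C'pos: "C' > 0" using C'd Hpos A by simp
  have "lam12 * (P12 * B12) powr (2 / \<alpha>) < lam12' * (P12' * B12) powr (2 / \<alpha>)"
  proof (cases "lam12 < lam12'")
    case True
    have "lam12 * (P12 * B12) powr (2 / \<alpha>) < lam12' * (P12 * B12) powr (2 / \<alpha>)"
      using True X by simp
    also have "\<dots> \<le> lam12' * (P12' * B12) powr (2 / \<alpha>)"
      using XX A by (intro mult_left_mono) auto
    finally show ?thesis .
  next
    case False
    then have "P12 < P12'" using A by auto
    then have "(P12 * B12) powr (2 / \<alpha>) < (P12' * B12) powr (2 / \<alpha>)"
      using A by (intro powr_less_mono2) auto
    then have "lam12 * (P12 * B12) powr (2 / \<alpha>) < lam12 * (P12' * B12) powr (2 / \<alpha>)"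
      using A by simp
    also have "\<dots> \<le> lam12' * (P12' * B12) powr (2 / \<alpha>)"
      using A X XX by (intro mult_right_mono) auto
    finally show ?thesis .
  qed
  then have CC: "C < C'" using Cd C'd Hpos by simp
  have opt: "is_optimal \<delta> Nf Nc C q" and opt': "is_optimal \<delta> Nf Nc C' q'"
    using A by (simp_all add: C_def C'_def)
  have fin: "f \<in> {1..Nf}" and f1in: "f + 1 \<in> {1..Nf}" using A by auto
  have Nf1: "1 \<le> Nf" using A by simp
  define s where "s g = sqrt (zipf \<delta> Nf g)" for g
  have spos: "g \<in> {1..Nf} \<Longrightarrow> s g > 0" for g using zipf_pos[of g Nf \<delta>] by (simp add: s_def)
  have sff: "s (f + 1) < s f"
    unfolding s_def using zipf_strict[of f Nf \<delta>] A Nf1 by simp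
  define mu where "mu = (C + q f) / s f"
  define mu' where "mu' = (C' + q' f) / s f"
  have muf: "mu * s f = C + q f" using spos[OF fin] by (simp add: mu_def)
  have muf': "mu' * s f = C' + q' f" using spos[OF fin] by (simp add: mu'_def)
  have k1: "g \<in> {1..Nf} \<Longrightarrow> q g < 1 \<Longrightarrow> mu * s g - C \<le> q g" for g
    using kkt(1)[OF Cpos opt fin A(20) A(21)] by (simp add: mu_def s_def)
  have k2: "g \<in> {1..Nf} \<Longrightarrow> 0 < q g \<Longrightarrow> q g \<le> mu * s g - C" for g
    using kkt(2)[OF Cpos opt fin A(20) A(21)] by (simp add: mu_def s_def)
  have k1': "g \<in> {1..Nf} \<Longrightarrow> q' g < 1 \<Longrightarrow> mu' * s g - C' \<le> q' g" for g
    using kkt(1)[OF C'pos opt' fin A(24) A(25)] by (simp add: mu'_def s_def)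
  have k2': "g \<in> {1..Nf} \<Longrightarrow> 0 < q' g \<Longrightarrow> q' g \<le> mu' * s g - C'" for g
    using kkt(2)[OF C'pos opt' fin A(24) A(25)] by (simp add: mu'_def s_def)
  have q01: "g \<in> {1..Nf} \<Longrightarrow> 0 \<le> q g \<and> q g \<le> 1" for g
    using opt by (auto simp: is_optimal_def feasible_def)
  have q01': "g \<in> {1..Nf} \<Longrightarrow> 0 \<le> q' g \<and> q' g \<le> 1" for g
    using opt' by (auto simp: is_optimal_def feasible_def)
  have mumu: "mu < mu'"
  proof (rule ccontr)
    assume "\<not> mu < mu'"
    then have mle: "mu' \<le> mu" by simp
    have le: "\<forall>g\<in>{1..Nf}. q' g \<le> q g"
    proof
      fix g assume g: "g \<in> {1..Nf}"
      show "q' g \<le> q g"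
      proof (cases "0 < q' g \<and> q g < 1")
        case True
        have "q' g \<le> mu' * s g - C'" using k2'[OF g] True by simp
        also have "\<dots> \<le> mu * s g - C'" using mle spos[OF g] by (simp add: mult_right_mono)
        also have "\<dots> < mu * s g - C" using CC by simp
        also have "\<dots> \<le> q g" using k1[OF g] True by simp
        finally show ?thesis by simp
      next
        case False
        then show ?thesis using q01[OF g] q01'[OF g] by auto
      qed
    qed
    have "q' f < q f"
    proof -
      have "mu' * s f \<le> mu * s f" using mle spos[OF fin] by (simp add: mult_right_mono)
      then show ?thesis using muf muf' CC by simp
    qed
    then have "(\<Sum>g=1..Nf. q' g) < (\<Sum>g=1..Nf. q g)"
      using le fin by (intro sum_strict_mono_ex1) auto
    moreover have "(\<Sum>g=1..Nf. q' g) = real Nc"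
      by (rule tight[OF C'pos opt' fin A(25) zipf_pos]) (use A Nf1 in auto)
    moreover have "(\<Sum>g=1..Nf. q g) \<le> real Nc"
      using opt by (simp add: is_optimal_def feasible_def)
    ultimately show False by simp
  qed
  have e1: "q (f+1) = mu * s (f+1) - C"
    using k1[OF f1in A(23)] k2[OF f1in A(22)] by simp
  have e2: "q' (f+1) = mu' * s (f+1) - C'"
    using k1'[OF f1in A(27)] k2'[OF f1in A(26)] by simp
  have "q f - q (f+1) = mu * (s f - s (f+1))" using muf e1 by (simp add: algebra_simps)
  also have "\<dots> < mu' * (s f - s (f+1))" using mumu sff by simp
  also have "\<dots> = q' f - q' (f+1)" using muf' e2 by (simp add: algebra_simps)
  finally show ?thesis .
qed

end
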